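(* Let $(\mathfrak{g},\langle\cdot,\cdot\rangle)$ be a $3$-dimensional Lie algebra with a Lorentzian scalar product, and let $\mathfrak{h}$ be a codimension one Lie subalgebra. Then: (i) if $\mathfrak{h}$ is abelian, $(\langle\cdot,\cdot\rangle,\mathfrak{h})$ is a Kundt pair if and only if $\mathfrak{h}$ is degenerate and $\mathrm{ad}_e(\mathfrak{g})\subset\mathfrak{h}$ for a generator $e$ of $\mathfrak{h}^\perp$; (ii) if $\mathfrak{h}$ is non-abelian, $(\langle\cdot,\cdot\rangle,\mathfrak{h})$ is a Kundt pair if and only if $\mathfrak{h}^\perp=[\mathfrak{h},\mathfrak{h}]$ and $\mathrm{ad}_e(\mathfrak{g})\subset\mathfrak{h}$ for a generator $e$ of $\mathfrak{h}^\perp$.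
   Context: The Levi-Civita product on $(\mathfrak{g},\langle\cdot,\cdot\rangle)$ is defined by $2\langle u\bullet v,w\rangle=\langle[u,v],w\rangle+\langle[w,u],v\rangle+\langle[w,v],u\rangle$. A Kundt pair on $\mathfrak{g}$ is a pair $(\langle\cdot,\cdot\rangle,\mathfrak{h})$ where $\langle\cdot,\cdot\rangle$ is a Lorentzian scalar product on $\mathfrak{g}$ and $\mathfrak{h}$ is a codimension one subalgebra, degenerate for $\langle\cdot,\cdot\rangle$, stable by $\bullet$ ($u\bullet v\in\mathfrak{h}$ for $u,v\in\mathfrak{h}$), and such that $e\bullet e=0$ for every $e\in\mathfrak{h}^\perp$. *)

theory Defs
  imports "HOL-Analysis.Analysis"
begin

type_synonym vec3 = "real ^ 3"

definition lie_bracket :: "(vec3 \<Rightarrow> vec3 \<Rightarrow> vec3) \<Rightarrow> bool" where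
  "lie_bracket br \<longleftrightarrow> bilinear br \<and> (\<forall>x y. br x y = - br y x) \<and>
     (\<forall>x y z. br x (br y z) + br y (br z x) + br z (br x y) = 0)"

definition lorentzian :: "(vec3 \<Rightarrow> vec3 \<Rightarrow> real) \<Rightarrow> bool" where
  "lorentzian B \<longleftrightarrow> bilinear B \<and> (\<forall>x y. B x y = B y x) \<and>
     (\<exists>e0 e1 e2. span {e0, e1, e2} = UNIV \<and>
        B e0 e0 = -1 \<and> B e1 e1 = 1 \<and> B e2 e2 = 1 \<and>
        B e0 e1 = 0 \<and> B e0 e2 = 0 \<and> B e1 e2 = 0)"

definition lie_subalgebra :: "(vec3 \<Rightarrow> vec3 \<Rightarrow> vec3) \<Rightarrow> vec3 set \<Rightarrow> bool" where
  "lie_subalgebra br h \<longleftrightarrow> subspace h \<and> (\<forall>x\<in>h. \<forall>y\<in>h. br x y \<in> h)"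

definition abelian_sub :: "(vec3 \<Rightarrow> vec3 \<Rightarrow> vec3) \<Rightarrow> vec3 set \<Rightarrow> bool" where
  "abelian_sub br h \<longleftrightarrow> (\<forall>x\<in>h. \<forall>y\<in>h. br x y = 0)"

definition derived_sub :: "(vec3 \<Rightarrow> vec3 \<Rightarrow> vec3) \<Rightarrow> vec3 set \<Rightarrow> vec3 set" where
  "derived_sub br h = span {br x y | x y. x \<in> h \<and> y \<in> h}"

definition orth :: "(vec3 \<Rightarrow> vec3 \<Rightarrow> real) \<Rightarrow> vec3 set \<Rightarrow> vec3 set" where
  "orth B h = {x. \<forall>y\<in>h. B x y = 0}"

definition degenerate_sub :: "(vec3 \<Rightarrow> vec3 \<Rightarrow> real) \<Rightarrow> vec3 set \<Rightarrow> bool" where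
  "degenerate_sub B h \<longleftrightarrow> (\<exists>x\<in>h. x \<noteq> 0 \<and> (\<forall>y\<in>h. B x y = 0))"

definition levi_civita ::
  "(vec3 \<Rightarrow> vec3 \<Rightarrow> vec3) \<Rightarrow> (vec3 \<Rightarrow> vec3 \<Rightarrow> real) \<Rightarrow> vec3 \<Rightarrow> vec3 \<Rightarrow> vec3" where
  "levi_civita br B u v = (THE w. \<forall>z. 2 * B w z = B (br u v) z + B (br z u) v + B (br z v) u)"

definition kundt_pair ::
  "(vec3 \<Rightarrow> vec3 \<Rightarrow> vec3) \<Rightarrow> (vec3 \<Rightarrow> vec3 \<Rightarrow> real) \<Rightarrow> vec3 set \<Rightarrow> bool" where
  "kundt_pair br B h \<longleftrightarrow> lorentzian B \<and> lie_subalgebra br h \<and> dim h = 2 \<and>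
     degenerate_sub B h \<and>
     (\<forall>u\<in>h. \<forall>v\<in>h. levi_civita br B u v \<in> h) \<and>
     (\<forall>e\<in>orth B h. levi_civita br B e e = 0)"

end

theory Submission
  imports Defs
begin

lemma lor_basics:
  assumes "lorentzian B"
  shows "bilinear B" "\<And>x y. B x y = B y x"
  using assms unfolding lorentzian_def by auto

lemma bil_simps:
  assumes "bilinear B"
  shows "B (x + y) z = B x z + B y z" "B x (y + z) = B x y + B x z"
    "B (c *\<^sub>R x) y = c * B x y" "B x (c *\<^sub>R y) = c * B x y"
    "B (x - y) z = B x z - B y z" "B x (y - z) = B x y - B x z"
    "B (- x) y = - B x y" "B x (- y) = - B x y"
    "B 0 y = 0" "B x 0 = 0"
  using assms by (simp_all add: bilinear_ladd bilinear_radd bilinear_lmul bilinear_rmul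
      bilinear_lsub bilinear_rsub bilinear_lneg bilinear_rneg bilinear_lzero bilinear_rzero)

lemma lor_nondeg:
  assumes "lorentzian B" "\<And>y. B x y = 0"
  shows "x = 0"
proof -
  from assms(1) obtain e0 e1 e2 where sp: "span {e0, e1, e2} = UNIV" and
    v: "B e0 e0 = -1" "B e1 e1 = 1" "B e2 e2 = 1"
        "B e0 e1 = 0" "B e0 e2 = 0" "B e1 e2 = 0" and bl: "bilinear B" and sy: "\<And>x y. B x y = B y x"
    unfolding lorentzian_def by blast
  have "x \<in> span {e0, e1, e2}" using sp by auto
  then obtain a where "x - a *\<^sub>R e0 \<in> span {e1, e2}" by (auto simp: span_insert)
  then obtain b where "x - a *\<^sub>R e0 - b *\<^sub>R e1 \<in> span {e2}" by (auto simp: span_insert)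
  then obtain c where xe: "x - a *\<^sub>R e0 - b *\<^sub>R e1 = c *\<^sub>R e2" by (auto simp: span_singleton)
  hence x: "x = a *\<^sub>R e0 + b *\<^sub>R e1 + c *\<^sub>R e2" by (simp add: algebra_simps)
  have s: "B e1 e0 = 0" "B e2 e0 = 0" "B e2 e1 = 0" using v sy by metis+
  have "B x e0 = - a" "B x e1 = b" "B x e2 = c"
    unfolding x using v s by (simp_all add: bil_simps[OF bl])
  hence "a = 0" "b = 0" "c = 0" using assms(2) by (metis neg_equal_0_iff_equal)+
  thus ?thesis using x by simp
qed

lemma lor_rep:
  assumes "lorentzian B"
  obtains J where "linear J" "\<And>x y. B x y = inner x (J y)" "inj J" "surj J"
proof -
  have bl: "bilinear B" and sy: "\<And>x y. B x y = B y x" using lor_basics[OF assms] by auto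
  define J where "J y = (\<Sum>b\<in>Basis. B b y *\<^sub>R b)" for y :: vec3
  have rep: "B x y = inner x (J y)" for x y
  proof -
    have lin: "linear (\<lambda>x. B x y)" using bl unfolding bilinear_def by simp
    have "B x y = B (\<Sum>b\<in>Basis. inner x b *\<^sub>R b) y" by (simp add: euclidean_representation)
    also have "\<dots> = (\<Sum>b\<in>Basis. inner x b * B b y)"
      by (simp add: linear_sum[OF lin] linear_cmul[OF lin])
    also have "\<dots> = inner x (J y)" unfolding J_def by (simp add: inner_sum_right mult.commute)
    finally show ?thesis .
  qed
  have lJ: "linear J"
  proof
    fix x y :: vec3 and c :: real
    show "J (x + y) = J x + J y" unfolding J_def by (simp add: bil_simps[OF bl] scaleR_add_left sum.distrib)
    show "J (c *\<^sub>R x) = c *\<^sub>R J x" unfolding J_def by (simp add: bil_simps[OF bl] scaleR_sum_right)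
  qed
  have iJ: "inj J"
  proof (rule linear_injective_0[THEN iffD2, OF lJ], intro allI impI)
    fix y assume "J y = 0"
    hence "\<And>x. B y x = 0" using rep sy by simp
    thus "y = 0" using lor_nondeg[OF assms] by blast
  qed
  have "surj J" using linear_injective_imp_surjective[OF lJ iJ] by simp
  thus ?thesis using that lJ rep iJ by blast
qed


lemma orth_subspace:
  assumes "lorentzian B" shows "subspace (orth B W)"
proof -
  have bl: "bilinear B" using lor_basics[OF assms] by auto
  show ?thesis unfolding subspace_def orth_def by (simp add: bil_simps[OF bl])
qed

lemma orth_dim:
  assumes "lorentzian B" "subspace W"
  shows "dim (orth B W) + dim W = 3"
proof -
  obtain J where lJ: "linear J" and rep: "\<And>x y. B x y = inner x (J y)" and iJ: "inj J"
    using lor_rep[OF assms(1)] by metis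
  have e: "orth B W = {y \<in> UNIV. \<forall>x \<in> J ` W. orthogonal x y}"
    unfolding orth_def orthogonal_def by (simp add: rep inner_commute)
  have d: "dim (J ` W) = dim W"
    by (rule dim_image_eq[OF lJ]) (use iJ in \<open>auto intro: inj_on_subset\<close>)
  have "dim {y \<in> UNIV. \<forall>x \<in> J ` W. orthogonal x y} + dim (J ` W) = dim (UNIV :: vec3 set)"
    by (rule dim_subspace_orthogonal_to_vectors)
       (simp_all add: linear_subspace_image[OF lJ assms(2)] subspace_UNIV)
  thus ?thesis using e d by simp
qed

lemma dim1_span:
  assumes "subspace (S :: vec3 set)" "dim S = 1"
  obtains n where "n \<noteq> 0" "S = span {n}"
proof -
  obtain Bs where "Bs \<subseteq> S" "independent Bs" "S \<subseteq> span Bs" "card Bs = dim S"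
    by (rule basis_exists)
  then obtain n where "Bs = {n}" "n \<in> S" "independent {n}" "S \<subseteq> span {n}"
    using assms(2) by (auto simp: card_1_singleton_iff)
  moreover have "span {n} \<subseteq> S" using \<open>n \<in> S\<close> assms(1) by (simp add: span_minimal)
  moreover have "n \<noteq> 0" using \<open>independent {n}\<close> dependent_zero by blast
  ultimately show ?thesis using that by blast
qed

lemma normal_exists:
  assumes "lorentzian B" "subspace h" "dim h = 2"
  obtains n where "n \<noteq> 0" "orth B h = span {n}" "h = {x. B x n = 0}"
proof -
  have bl: "bilinear B" and sy: "\<And>x y. B x y = B y x" using lor_basics[OF assms(1)] by auto
  have "dim (orth B h) = 1" using orth_dim[OF assms(1,2)] assms(3) by simp
  then obtain n where n0: "n \<noteq> 0" and on: "orth B h = span {n}"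
    using dim1_span orth_subspace[OF assms(1)] by blast
  have T: "{x. B x n = 0} = orth B (span {n})"
    unfolding orth_def span_singleton by (auto simp: bil_simps[OF bl])
  have "dim (span {n}) = 1" using n0 by (simp add: dim_span_eq_card_independent)
  hence dT: "dim {x. B x n = 0} = 2" using orth_dim[OF assms(1), of "span {n}"] T by simp
  have sub: "h \<subseteq> {x. B x n = 0}"
  proof
    fix x assume "x \<in> h"
    have "n \<in> orth B h" using on by (simp add: span_base)
    thus "x \<in> {x. B x n = 0}" using \<open>x \<in> h\<close> sy unfolding orth_def by auto
  qed
  have "h = {x. B x n = 0}"
    by (rule subspace_dim_equal[OF assms(2) _ sub]) (use T orth_subspace[OF assms(1)] dT assms(3) in auto)
  thus ?thesis using that n0 on by blast
qed


lemma br_simps: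
  assumes "bilinear (br :: vec3 \<Rightarrow> vec3 \<Rightarrow> vec3)"
  shows "br (x + y) z = br x z + br y z" "br x (y + z) = br x y + br x z"
    "br (c *\<^sub>R x) y = c *\<^sub>R br x y" "br x (c *\<^sub>R y) = c *\<^sub>R br x y"
    "br (x - y) z = br x z - br y z" "br x (y - z) = br x y - br x z"
    "br (- x) y = - br x y" "br x (- y) = - br x y"
    "br 0 y = 0" "br x 0 = 0"
  using assms by (simp_all add: bilinear_ladd bilinear_radd bilinear_lmul bilinear_rmul
      bilinear_lsub bilinear_rsub bilinear_lneg bilinear_rneg bilinear_lzero bilinear_rzero)

lemma lc_char:
  assumes "lie_bracket br" "lorentzian B"
  shows "2 * B (levi_civita br B u v) z = B (br u v) z + B (br z u) v + B (br z v) u"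
proof -
  have bl: "bilinear B" and sy: "\<And>x y. B x y = B y x" using lor_basics[OF assms(2)] by auto
  have bb: "bilinear br" using assms(1) unfolding lie_bracket_def by blast+
  obtain J where lJ: "linear J" and rep: "\<And>x y. B x y = inner x (J y)" and sJ: "surj J"
    using lor_rep[OF assms(2)] by metis
  define L where "L z = B (br u v) z + B (br z u) v + B (br z v) u" for z
  have lL: "linear L"
  proof
    fix x y :: vec3 and c :: real
    show "L (x + y) = L x + L y" unfolding L_def by (simp add: bil_simps[OF bl] br_simps[OF bb])
    show "L (c *\<^sub>R x) = c *\<^sub>R L x" unfolding L_def by (simp add: bil_simps[OF bl] br_simps[OF bb] algebra_simps)
  qed
  define c where "c = (\<Sum>b\<in>Basis. L b *\<^sub>R b)"
  have Lc: "L z = inner z c" for z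
  proof -
    have "L z = L (\<Sum>b\<in>Basis. inner z b *\<^sub>R b)" by (simp add: euclidean_representation)
    also have "\<dots> = (\<Sum>b\<in>Basis. inner z b * L b)"
      by (simp add: linear_sum[OF lL] linear_cmul[OF lL])
    also have "\<dots> = inner z c" unfolding c_def by (simp add: inner_sum_right mult.commute)
    finally show ?thesis .
  qed
  obtain w where w: "J w = (1/2) *\<^sub>R c" using sJ by (metis surjD)
  have P: "\<forall>z. 2 * B w z = L z"
  proof
    fix z
    have "2 * B w z = 2 * B z w" using sy by metis
    also have "\<dots> = L z" using w by (simp add: rep Lc)
    finally show "2 * B w z = L z" .
  qed
  have U: "w' = w" if "\<forall>z. 2 * B w' z = L z" for w'
  proof -
    have "\<And>z. B (w' - w) z = 0"
    proof -
      fix z have "2 * B w' z = 2 * B w z" using that P by simp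
      thus "B (w' - w) z = 0" by (simp add: bil_simps[OF bl])
    qed
    thus ?thesis using lor_nondeg[OF assms(2)] by fastforce
  qed
  have "levi_civita br B u v = w"
    unfolding levi_civita_def L_def[symmetric] using P U by (rule the_equality)
  thus ?thesis using P L_def by simp
qed


theorem proposition5p1:
  fixes br :: "vec3 \<Rightarrow> vec3 \<Rightarrow> vec3" and B :: "vec3 \<Rightarrow> vec3 \<Rightarrow> real" and h :: "vec3 set"
  assumes "lie_bracket br" and "lorentzian B"
    and "lie_subalgebra br h" and "dim h = 2"
  shows "(abelian_sub br h \<longrightarrow>
            (kundt_pair br B h \<longleftrightarrow>
              degenerate_sub B h \<and>
              (\<exists>e. e \<noteq> 0 \<and> orth B h = span {e} \<and> (\<forall>x. br e x \<in> h))))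
       \<and> (\<not> abelian_sub br h \<longrightarrow>
            (kundt_pair br B h \<longleftrightarrow>
              orth B h = derived_sub br h \<and>
              (\<exists>e. e \<noteq> 0 \<and> orth B h = span {e} \<and> (\<forall>x. br e x \<in> h))))"
proof -
  have bl: "bilinear B" and sy: "\<And>x y. B x y = B y x" using lor_basics[OF assms(2)] by auto
  have bb: "bilinear br" and anti: "\<And>x y. br x y = - br y x"
    using assms(1) unfolding lie_bracket_def by blast+
  have brr: "br x x = 0" for x
  proof -
    have e: "br x x = - br x x" by (rule anti)
    have "br x x + br x x = 0" by (subst (2) e) simp
    hence "(2::real) *\<^sub>R br x x = 0" by (simp add: scaleR_2)
    thus ?thesis by simp
  qed
  have sh: "subspace h" and cl: "\<And>x y. x \<in> h \<Longrightarrow> y \<in> h \<Longrightarrow> br x y \<in> h"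
    using assms(3) unfolding lie_subalgebra_def by auto
  obtain n where n0: "n \<noteq> 0" and on: "orth B h = span {n}" and hn: "h = {x. B x n = 0}"
    using normal_exists[OF assms(2) sh assms(4)] by blast
  have memh: "x \<in> h \<longleftrightarrow> B x n = 0" for x using hn by blast
  have memo: "x \<in> orth B h \<longleftrightarrow> (\<exists>k. x = k *\<^sub>R n)" for x using on by (auto simp: span_singleton)
  have scl: "c *\<^sub>R x \<in> h" if "x \<in> h" for c x using sh that by (simp add: subspace_scale)
  let ?lc = "levi_civita br B"
  have lcB: "2 * B (?lc u v) n = B (br u v) n + B (br n u) v + B (br n v) u" for u v
    using lc_char[OF assms(1,2)] by blast
  have K3: "(\<forall>e\<in>orth B h. ?lc e e = 0) \<longleftrightarrow> (\<forall>x. br n x \<in> h)"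
  proof
    assume H: "\<forall>e\<in>orth B h. ?lc e e = 0"
    have "?lc n n = 0" using H memo[of n] by (metis scaleR_one)
    show "\<forall>x. br n x \<in> h"
    proof
      fix x
      have "2 * B (?lc n n) x = B (br n n) x + B (br x n) n + B (br x n) n"
        using lc_char[OF assms(1,2)] by blast
      hence "B (br x n) n = 0" using \<open>?lc n n = 0\<close> by (simp add: brr bil_simps[OF bl])
      hence "br x n \<in> h" using memh by simp
      hence "- br x n \<in> h" using scl[of _ "-1"] by simp
      thus "br n x \<in> h" using anti[of n x] by simp
    qed
  next
    assume H: "\<forall>x. br n x \<in> h"
    show "\<forall>e\<in>orth B h. ?lc e e = 0"
    proof
      fix e assume "e \<in> orth B h"
      then obtain k where e: "e = k *\<^sub>R n" using memo by blast
      have "B (?lc e e) z = 0" for z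
      proof -
        have "2 * B (?lc e e) z = B (br e e) z + B (br z e) e + B (br z e) e"
          using lc_char[OF assms(1,2)] by blast
        moreover have "B (br z n) n = 0" using H[rule_format, of z] anti[of z n] memh
          by (simp add: bil_simps[OF bl])
        ultimately show ?thesis unfolding e by (simp add: brr bil_simps[OF bl] br_simps[OF bb])
      qed
      thus "?lc e e = 0" using lor_nondeg[OF assms(2)] by blast
    qed
  qed
  have Ex: "(\<exists>e. e \<noteq> 0 \<and> orth B h = span {e} \<and> (\<forall>x. br e x \<in> h)) \<longleftrightarrow> (\<forall>x. br n x \<in> h)"
  proof
    assume "\<exists>e. e \<noteq> 0 \<and> orth B h = span {e} \<and> (\<forall>x. br e x \<in> h)"
    then obtain e where e0: "e \<noteq> 0" and oe: "orth B h = span {e}" and E: "\<forall>x. br e x \<in> h" by blast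
    have "e \<in> orth B h" using oe by (simp add: span_base)
    then obtain k where ek: "e = k *\<^sub>R n" using memo by blast
    with e0 have k0: "k \<noteq> 0" by auto
    show "\<forall>x. br n x \<in> h"
    proof
      fix x
      have "(1/k) *\<^sub>R br e x \<in> h" using E scl by blast
      thus "br n x \<in> h" using k0 unfolding ek by (simp add: br_simps[OF bb])
    qed
  next
    assume "\<forall>x. br n x \<in> h" thus "\<exists>e. e \<noteq> 0 \<and> orth B h = span {e} \<and> (\<forall>x. br e x \<in> h)"
      using n0 on by blast
  qed
  have K2: "(\<forall>u\<in>h. \<forall>v\<in>h. ?lc u v \<in> h) \<longleftrightarrow> (\<forall>u\<in>h. \<forall>v\<in>h. B (br n u) v + B (br n v) u = 0)"
  proof -
    have "?lc u v \<in> h \<longleftrightarrow> B (br n u) v + B (br n v) u = 0" if "u \<in> h" "v \<in> h" for u v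
    proof -
      have "B (br u v) n = 0" using cl[OF that] memh by simp
      thus ?thesis using lcB[of u v] memh[of "?lc u v"] by auto
    qed
    thus ?thesis by blast
  qed
  have Deg: "degenerate_sub B h \<longleftrightarrow> n \<in> h"
  proof
    assume "degenerate_sub B h"
    then obtain x where x: "x \<in> h" "x \<noteq> 0" "\<forall>y\<in>h. B x y = 0" unfolding degenerate_sub_def by blast
    hence "x \<in> orth B h" unfolding orth_def by simp
    then obtain k where xk: "x = k *\<^sub>R n" using memo by blast
    with x have k0: "k \<noteq> 0" by auto
    have "(1/k) *\<^sub>R x \<in> h" using x scl by blast
    thus "n \<in> h" using k0 xk by simp
  next
    assume "n \<in> h"
    thus "degenerate_sub B h" unfolding degenerate_sub_def using n0 memh sy by metis
  qed
  have KP: "kundt_pair br B h \<longleftrightarrow> n \<in> h \<and> (\<forall>u\<in>h. \<forall>v\<in>h. B (br n u) v + B (br n v) u = 0)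
                                   \<and> (\<forall>x. br n x \<in> h)"
    unfolding kundt_pair_def using assms(2,3,4) Deg K2 K3 by blast
  show ?thesis
  proof (intro conjI impI)
    assume ab: "abelian_sub br h"
    have "n \<in> h \<Longrightarrow> (\<forall>u\<in>h. \<forall>v\<in>h. B (br n u) v + B (br n v) u = 0)"
      using ab unfolding abelian_sub_def by (simp add: bil_simps[OF bl])
    thus "kundt_pair br B h \<longleftrightarrow> degenerate_sub B h \<and>
              (\<exists>e. e \<noteq> 0 \<and> orth B h = span {e} \<and> (\<forall>x. br e x \<in> h))"
      using KP Deg Ex by blast
  next
    assume nab: "\<not> abelian_sub br h"
    have dh: "derived_sub br h \<subseteq> h"
      unfolding derived_sub_def by (rule span_minimal) (use sh cl in auto)
    have gen: "br x y \<in> derived_sub br h" if "x \<in> h" "y \<in> h" for x y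
      unfolding derived_sub_def using that by (auto intro!: span_base)
    have sd: "subspace (derived_sub br h)" unfolding derived_sub_def by (rule subspace_span)
    show "kundt_pair br B h \<longleftrightarrow> orth B h = derived_sub br h \<and>
              (\<exists>e. e \<noteq> 0 \<and> orth B h = span {e} \<and> (\<forall>x. br e x \<in> h))"
    proof
      assume "orth B h = derived_sub br h \<and> (\<exists>e. e \<noteq> 0 \<and> orth B h = span {e} \<and> (\<forall>x. br e x \<in> h))"
      hence od: "orth B h = derived_sub br h" and A: "\<forall>x. br n x \<in> h" using Ex by auto
      have nh: "n \<in> h" using od dh memo[of n] by (metis scaleR_one subsetD)
      have "B (br n u) v = 0" if "u \<in> h" "v \<in> h" for u v
        using gen[OF nh that(1)] od that(2) unfolding orth_def by auto
      thus "kundt_pair br B h" using KP nh A by simp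
    next
      assume "kundt_pair br B h"
      hence nh: "n \<in> h" and K2r: "\<forall>u\<in>h. \<forall>v\<in>h. B (br n u) v + B (br n v) u = 0"
        and A: "\<forall>x. br n x \<in> h" using KP by auto
      have "\<not> h \<subseteq> span {n}"
      proof
        assume "h \<subseteq> span {n}"
        hence "dim h \<le> dim (span {n})" by (rule dim_subset)
        also have "\<dots> = 1" using n0 by (simp add: dim_span_eq_card_independent)
        finally show False using assms(4) by simp
      qed
      then obtain u where uh: "u \<in> h" and un: "u \<notin> span {n}" by blast
      have "u \<noteq> n" using un span_base[of n "{n}"] by auto
      have ind: "independent {u, n}" using un n0 by (simp add: independent_insert)
      have "card {u, n} = 2" using \<open>u \<noteq> n\<close> by simp
      hence d2: "dim (span {u, n}) = 2" using ind dim_span_eq_card_independent by metis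
      have "span {u, n} \<subseteq> h" using uh nh sh by (simp add: span_minimal)
      hence hsp: "span {u, n} = h"
        by (rule subspace_dim_equal[OF subspace_span sh]) (use d2 assms(4) in simp)
      have decomp: "\<exists>a b. x = a *\<^sub>R u + b *\<^sub>R n" if "x \<in> h" for x
      proof -
        from that hsp obtain a where "x - a *\<^sub>R u \<in> span {n}" by (auto simp: span_insert)
        then obtain b where "x - a *\<^sub>R u = b *\<^sub>R n" by (auto simp: span_singleton)
        hence "x = a *\<^sub>R u + b *\<^sub>R n" by (simp add: algebra_simps)
        thus ?thesis by blast
      qed
      have nuo: "br n u \<in> orth B h"
        unfolding orth_def
      proof (intro CollectI ballI)
        fix y assume "y \<in> h"
        then obtain a b where y: "y = a *\<^sub>R u + b *\<^sub>R n" using decomp by blast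
        have "B (br n u) n = 0" using cl[OF nh uh] memh by simp
        moreover have "B (br n u) u = 0" using K2r uh by fastforce
        ultimately show "B (br n u) y = 0" unfolding y by (simp add: bil_simps[OF bl])
      qed
      have bxy: "br x y = (b * c - a * d) *\<^sub>R br n u"
        if "x = a *\<^sub>R u + b *\<^sub>R n" "y = c *\<^sub>R u + d *\<^sub>R n" for x y a b c d
        unfolding that using anti[of u n]
        by (simp add: br_simps[OF bb] brr algebra_simps)
      have "derived_sub br h \<subseteq> orth B h"
        unfolding derived_sub_def
      proof (rule span_minimal)
        show "subspace (orth B h)" by (rule orth_subspace[OF assms(2)])
        show "{br x y |x y. x \<in> h \<and> y \<in> h} \<subseteq> orth B h"
        proof safe
          fix x y assume "x \<in> h" "y \<in> h"
          then obtain a b c d where "x = a *\<^sub>R u + b *\<^sub>R n" "y = c *\<^sub>R u + d *\<^sub>R n"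
            using decomp by meson
          hence "br x y = (b * c - a * d) *\<^sub>R br n u" by (rule bxy)
          thus "br x y \<in> orth B h" using nuo orth_subspace[OF assms(2)]
            by (simp add: subspace_scale)
        qed
      qed
      moreover have "orth B h \<subseteq> derived_sub br h"
      proof -
        obtain x y where "x \<in> h" "y \<in> h" "br x y \<noteq> 0" using nab unfolding abelian_sub_def by blast
        then obtain a b c d where "x = a *\<^sub>R u + b *\<^sub>R n" "y = c *\<^sub>R u + d *\<^sub>R n"
          using decomp by meson
        hence "br x y = (b * c - a * d) *\<^sub>R br n u" by (rule bxy)
        hence nu0: "br n u \<noteq> 0" using \<open>br x y \<noteq> 0\<close> by auto
        obtain k where k: "br n u = k *\<^sub>R n" using nuo memo by blast
        with nu0 have k0: "k \<noteq> 0" by auto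
        have "(1/k) *\<^sub>R br n u \<in> derived_sub br h" using gen[OF nh uh] sd by (simp add: subspace_scale)
        hence "n \<in> derived_sub br h" using k k0 by simp
        thus ?thesis unfolding on using sd by (simp add: span_minimal)
      qed
      ultimately show "orth B h = derived_sub br h \<and>
              (\<exists>e. e \<noteq> 0 \<and> orth B h = span {e} \<and> (\<forall>x. br e x \<in> h))"
        using A Ex by blast
    qed
  qed
qed

end
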